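(* Let $q>1$ be the smallest period of $H$. Then $c>2A$, and at least one gap $\gamma_m$ ($1\le m\le q-1$) of the spectrum of $H$ is open.
   Context: Let $q\ge 2$ be an integer and let $(a_n)_{n\in\mathbb Z}$, $(b_n)_{n\in\mathbb Z}$ be real sequences with $a_n>0$, $a_{n+q}=a_n$, $b_{n+q}=b_n$ for all $n$, where $q$ is the smallest common period (there is no $1\le p<q$ with $a_{n+p}=a_n$ and $b_{n+p}=b_n$ for all $n$). $H$ is the bounded self-adjoint operator on $\ell^2(\mathbb Z)$ given by $(H\psi)_n=a_{n-1}\psi_{n-1}+b_n\psi_n+a_n\psi_{n+1}$. Set $A=(a_1a_2\cdots a_q)^{1/q}$. For $\lambda\in\mathbb C$ let $\phi(\lambda),\theta(\lambda)$ be the solutions of $a_{n-1}\psi_{n-1}+b_n\psi_n+a_n\psi_{n+1}=\lambda\psi_n$ ($n\in\mathbb Z$) with $\phi_0=0,\phi_1=1$ and $\theta_0=1,\theta_1=0$; the discriminant is the degree-$q$ polynomial $D(\lambda)=\phi_{q+1}(\lambda)+\theta_q(\lambda)$. The spectrum of $H$ is $\{\lambda\in\mathbb R:|D(\lambda)|\le 2\}$, a union of the $q$ bands $[\lambda^+_{m-1},\lambda^-_m]$, $m=1,\dots,q$, with $\lambda^+_0<\lambda^-_1\le\lambda^+_1<\lambda^-_2\le\dots\le\lambda^+_{q-1}<\lambda^-_q$, separated by the gaps $\gamma_m=(\lambda^-_m,\lambda^+_m)$, $m=1,\dots,q-1$ (a gap is open if $\lambda^-_m<\lambda^+_m$). Let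 $c=(\lambda^-_q-\lambda^+_0)/2$ be half the width of the spectrum. *)

theory Defs
  imports "HOL-Computational_Algebra.Polynomial"
begin

text \<open>Solutions of the three-term recurrence
  a(n-1) psi(n-1) + b(n) psi(n) + a(n) psi(n+1) = lambda psi(n), as real polynomials
  in lambda, for n >= 0, with prescribed psi(0) = p0, psi(1) = p1.\<close>
fun jsol :: "(int \<Rightarrow> real) \<Rightarrow> (int \<Rightarrow> real) \<Rightarrow> real poly \<Rightarrow> real poly \<Rightarrow> nat \<Rightarrow> real poly" where
  "jsol a b p0 p1 0 = p0"
| "jsol a b p0 p1 (Suc 0) = p1"
| "jsol a b p0 p1 (Suc (Suc k)) =
     smult (1 / a (int k + 1))
       ([:- b (int k + 1), 1:] * jsol a b p0 p1 (Suc k) - smult (a (int k)) (jsol a b p0 p1 k))"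

definition jphi :: "(int \<Rightarrow> real) \<Rightarrow> (int \<Rightarrow> real) \<Rightarrow> nat \<Rightarrow> real poly" where
  "jphi a b = jsol a b 0 1"

definition jtheta :: "(int \<Rightarrow> real) \<Rightarrow> (int \<Rightarrow> real) \<Rightarrow> nat \<Rightarrow> real poly" where
  "jtheta a b = jsol a b 1 0"

definition discr :: "(int \<Rightarrow> real) \<Rightarrow> (int \<Rightarrow> real) \<Rightarrow> nat \<Rightarrow> real poly" where
  "discr a b q = jphi a b (q + 1) + jtheta a b q"

definition sorted_roots :: "real poly \<Rightarrow> real list" where
  "sorted_roots p = (THE xs. sorted xs \<and> p = smult (lead_coeff p) (\<Prod>x\<leftarrow>xs. [:- x, 1:]))"

text \<open>Band edges: the 2q roots of D^2 - 4 in increasing order are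
  lambda+_0 <= lambda-_1 <= lambda+_1 <= ... <= lambda-_q.\<close>
definition edge_plus :: "(int \<Rightarrow> real) \<Rightarrow> (int \<Rightarrow> real) \<Rightarrow> nat \<Rightarrow> nat \<Rightarrow> real" where
  "edge_plus a b q m = sorted_roots ((discr a b q)\<^sup>2 - 4) ! (2 * m)"

definition edge_minus :: "(int \<Rightarrow> real) \<Rightarrow> (int \<Rightarrow> real) \<Rightarrow> nat \<Rightarrow> nat \<Rightarrow> real" where
  "edge_minus a b q m = sorted_roots ((discr a b q)\<^sup>2 - 4) ! (2 * m - 1)"

definition half_width :: "(int \<Rightarrow> real) \<Rightarrow> (int \<Rightarrow> real) \<Rightarrow> nat \<Rightarrow> real" where
  "half_width a b q = (edge_minus a b q q - edge_plus a b q 0) / 2"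

definition geo_mean_a :: "(int \<Rightarrow> real) \<Rightarrow> nat \<Rightarrow> real" where
  "geo_mean_a a q = root q (\<Prod>i=1..int q. a i)"

end

theory Submission
  imports Defs "HOL-Analysis.Analysis" "HOL-Computational_Algebra.Fundamental_Theorem_Algebra"
begin
lemma jsol_SS: "jsol a b p0 p1 (Suc (Suc k)) =
     smult (1 / a (int k + 1))
       ([:- b (int k + 1), 1:] * jsol a b p0 p1 (Suc k) - smult (a (int k)) (jsol a b p0 p1 k))"
  by simp

lemma poly_jsol_rec:
  assumes "a (int k + 1) \<noteq> 0"
  shows "a (int k + 1) * poly (jsol a b p0 p1 (Suc (Suc k))) x =
     (x - b (int k + 1)) * poly (jsol a b p0 p1 (Suc k)) x - a (int k) * poly (jsol a b p0 p1 k) x"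
  using assms by (simp add: algebra_simps)

lemma wronski:
  assumes "\<forall>n. a n > 0"
  shows "smult (a (int n)) (jtheta a b n * jphi a b (Suc n) - jtheta a b (Suc n) * jphi a b n) = [:a 0:]"
proof (induction n)
  case 0
  then show ?case by (simp add: jtheta_def jphi_def)
next
  case (Suc n)
  have an: "a (int n + 1) \<noteq> 0" using assms by (metis less_irrefl)
  define X where "X = [:- b (int n + 1), 1:]"
  define t0 where "t0 = jtheta a b n"
  define t1 where "t1 = jtheta a b (Suc n)"
  define f0 where "f0 = jphi a b n"
  define f1 where "f1 = jphi a b (Suc n)"
  have t2: "jtheta a b (Suc (Suc n)) = smult (1 / a (int n + 1)) (X * t1 - smult (a (int n)) t0)"
    by (simp add: jtheta_def X_def t0_def t1_def)
  have f2: "jphi a b (Suc (Suc n)) = smult (1 / a (int n + 1)) (X * f1 - smult (a (int n)) f0)"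
    by (simp add: jphi_def X_def f0_def f1_def)
  have e: "t1 * jphi a b (Suc (Suc n)) - jtheta a b (Suc (Suc n)) * f1
     = smult (1 / a (int n + 1)) (t1 * (X * f1 - smult (a (int n)) f0) - (X * t1 - smult (a (int n)) t0) * f1)"
    unfolding t2 f2 by (simp only: mult_smult_right mult_smult_left smult_diff_right[symmetric])
  have "smult (a (int (Suc n))) (t1 * jphi a b (Suc (Suc n)) - jtheta a b (Suc (Suc n)) * f1)
     = t1 * (X * f1 - smult (a (int n)) f0) - (X * t1 - smult (a (int n)) t0) * f1"
    unfolding e using an by (simp add: add.commute)
  also have "\<dots> = smult (a (int n)) (t0 * f1 - t1 * f0)"
    by (simp add: algebra_simps smult_diff_right)
  finally show ?case using Suc.IH by (simp add: t0_def t1_def f0_def f1_def)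
qed

subsection \<open>Complex evaluation\<close>

lemma mp_add: "map_poly complex_of_real (p + q) = map_poly of_real p + map_poly of_real q"
  by (rule poly_eqI) (simp add: coeff_map_poly)

lemma mp_diff: "map_poly complex_of_real (p - q) = map_poly of_real p - map_poly of_real q"
  by (rule poly_eqI) (simp add: coeff_map_poly)

lemma mp_smult: "map_poly complex_of_real (smult c p) = smult (of_real c) (map_poly of_real p)"
  by (rule poly_eqI) (simp add: coeff_map_poly)

lemma mp_mult: "map_poly complex_of_real (p * q) = map_poly of_real p * map_poly of_real q"
  by (rule poly_eqI) (simp add: coeff_map_poly coeff_mult)

lemma mp_pCons: "map_poly complex_of_real (pCons c p) = pCons (of_real c) (map_poly of_real p)"
  by (simp add: map_poly_pCons)

lemma mp_power: "map_poly complex_of_real (p ^ n) = (map_poly of_real p) ^ n"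
  by (induction n) (simp_all add: mp_mult)

definition cev :: "real poly \<Rightarrow> complex \<Rightarrow> complex" where
  "cev p z = poly (map_poly complex_of_real p) z"

lemma cev_add: "cev (p + q) z = cev p z + cev q z"
  by (simp add: cev_def mp_add)
lemma cev_diff: "cev (p - q) z = cev p z - cev q z"
  by (simp add: cev_def mp_diff)
lemma cev_mult: "cev (p * q) z = cev p z * cev q z"
  by (simp add: cev_def mp_mult)
lemma cev_smult: "cev (smult c p) z = of_real c * cev p z"
  by (simp add: cev_def mp_smult)
lemma cev_const: "cev [:c:] z = of_real c"
  by (simp add: cev_def mp_pCons)
lemma cev_lin: "cev [:c, d:] z = of_real c + of_real d * z"
  by (simp add: cev_def mp_pCons)
lemma cev_of_real: "cev p (of_real x) = of_real (poly p x)"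
proof (induction p)
  case (pCons c p)
  then show ?case by (simp add: cev_def map_poly_pCons)
qed (simp add: cev_def)

lemma cev_jsol_rec:
  assumes "a (int k + 1) \<noteq> 0"
  shows "of_real (a (int k)) * cev (jsol a b p0 p1 k) z
     + of_real (b (int k + 1)) * cev (jsol a b p0 p1 (Suc k)) z
     + of_real (a (int k + 1)) * cev (jsol a b p0 p1 (Suc (Suc k))) z
     = z * cev (jsol a b p0 p1 (Suc k)) z"
proof -
  have c: "cev (jsol a b p0 p1 (Suc (Suc k))) z = of_real (1 / a (int k + 1)) *
     ((of_real (- b (int k + 1)) + of_real 1 * z) * cev (jsol a b p0 p1 (Suc k)) z - of_real (a (int k)) * cev (jsol a b p0 p1 k) z)"
    by (simp only: jsol.simps cev_smult cev_diff cev_mult cev_lin)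
  have "of_real (a (int k + 1)) * cev (jsol a b p0 p1 (Suc (Suc k))) z =
     (z - of_real (b (int k + 1))) * cev (jsol a b p0 p1 (Suc k)) z - of_real (a (int k)) * cev (jsol a b p0 p1 k) z"
    unfolding c using assms by (simp add: field_simps)
  then show ?thesis by (simp add: algebra_simps)
qed

lemma cev_wronski:
  assumes "\<forall>n. a n > 0"
  shows "of_real (a (int n)) * (cev (jtheta a b n) z * cev (jphi a b (Suc n)) z
     - cev (jtheta a b (Suc n)) z * cev (jphi a b n) z) = of_real (a 0)"
proof -
  have "cev (smult (a (int n)) (jtheta a b n * jphi a b (Suc n) - jtheta a b (Suc n) * jphi a b n)) z
      = cev [:a 0:] z" using wronski[OF assms] by simp
  then show ?thesis by (simp add: cev_smult cev_diff cev_mult cev_const)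
qed

lemma green:
  fixes psi :: "nat \<Rightarrow> complex" and z :: complex and eps :: real
  assumes rec: "\<And>k. k < q \<Longrightarrow> of_real (a (int k)) * psi k + of_real (b (int k + 1)) * psi (Suc k)
        + of_real (a (int k + 1)) * psi (Suc (Suc k)) = z * psi (Suc k)"
    and pq: "psi q = of_real eps * psi 0" and pq1: "psi (Suc q) = of_real eps * psi 1"
    and eps: "eps * eps = 1" and aq: "a (int q) = a 0"
  shows "(z - cnj z) * (\<Sum>k<q. psi (Suc k) * cnj (psi (Suc k))) = 0"
proof -
  define W where "W k = of_real (a (int k)) * (cnj (psi k) * psi (Suc k) - psi k * cnj (psi (Suc k)))" for k
  have trm: "(z - cnj z) * (psi (Suc k) * cnj (psi (Suc k))) = W (Suc k) - W k" if "k < q" for k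
  proof -
    have e: "z * psi (Suc k) = of_real (a (int k)) * psi k + of_real (b (int k + 1)) * psi (Suc k)
        + of_real (a (int k + 1)) * psi (Suc (Suc k))" using rec[OF that] by simp
    have e2: "cnj z * cnj (psi (Suc k)) = of_real (a (int k)) * cnj (psi k) + of_real (b (int k + 1)) * cnj (psi (Suc k))
        + of_real (a (int k + 1)) * cnj (psi (Suc (Suc k)))"
      using arg_cong[OF e, of cnj] by simp
    have "(z - cnj z) * (psi (Suc k) * cnj (psi (Suc k)))
       = cnj (psi (Suc k)) * (z * psi (Suc k)) - psi (Suc k) * (cnj z * cnj (psi (Suc k)))"
      by (simp add: algebra_simps)
    also have "\<dots> = W (Suc k) - W k" unfolding e e2 W_def by (simp add: algebra_simps)
    finally show ?thesis .
  qed
  have "(z - cnj z) * (\<Sum>k<q. psi (Suc k) * cnj (psi (Suc k))) = (\<Sum>k<q. W (Suc k) - W k)"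
    by (simp add: sum_distrib_left trm)
  also have "\<dots> = W q - W 0" by (rule sum_lessThan_telescope)
  also have "W q = W 0"
  proof -
    have "W q = of_real (a 0) * (of_real (eps * eps)) * (cnj (psi 0) * psi 1 - psi 0 * cnj (psi 1))"
      unfolding W_def aq pq by (simp add: pq1 algebra_simps)
    then show ?thesis using eps by (simp add: W_def)
  qed
  finally show ?thesis by simp
qed

lemma kernel2:
  fixes A B C E :: complex
  assumes "A * E - B * C = 0"
  shows "\<exists>u v. (u, v) \<noteq> (0, 0) \<and> A * u + B * v = 0 \<and> C * u + E * v = 0"
proof (cases "A = 0 \<and> B = 0")
  case True
  show ?thesis
  proof (cases "C = 0 \<and> E = 0")
    case True
    then show ?thesis using \<open>A = 0 \<and> B = 0\<close> by (intro exI[of _ 1] exI[of _ 0]) simp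
  next
    case False
    then show ?thesis using True assms
      by (intro exI[of _ E] exI[of _ "- C"]) (auto simp: algebra_simps)
  qed
next
  case False
  then show ?thesis using assms
    by (intro exI[of _ B] exI[of _ "- A"]) (auto simp: algebra_simps)
qed

lemma discr_root_real:
  assumes q2: "q \<ge> 2" and apos: "\<forall>n. a n > 0" and aper: "\<forall>n. a (n + int q) = a n"
    and eps: "eps = 1 \<or> eps = -1"
    and root: "cev (discr a b q) z = 2 * of_real eps"
  shows "Im z = 0"
proof -
  define e :: complex where "e = of_real eps"
  have ee: "e * e = 1" using eps by (auto simp: e_def)
  define T where "T n = cev (jtheta a b n) z" for n
  define P where "P n = cev (jphi a b n) z" for n
  have aq: "a (int q) = a 0" using aper[rule_format, of 0] by simp
  have a0: "a 0 > 0" using apos by simp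
  have W: "T q * P (Suc q) - T (Suc q) * P q = 1"
  proof -
    have "of_real (a (int q)) * (T q * P (Suc q) - T (Suc q) * P q) = of_real (a 0)"
      using cev_wronski[OF apos, of q b z] by (simp add: T_def P_def)
    then show ?thesis using aq a0 by simp
  qed
  have D: "P (Suc q) + T q = 2 * e"
    using root by (simp add: discr_def cev_add T_def P_def e_def)
  have det: "(T q - e) * (P (Suc q) - e) - P q * T (Suc q) = 0"
  proof -
    have "(T q - e) * (P (Suc q) - e) - P q * T (Suc q)
        = (T q * P (Suc q) - T (Suc q) * P q) - e * (P (Suc q) + T q) + e * e"
      by (simp add: algebra_simps)
    also have "\<dots> = 0" using W D ee by (simp add: algebra_simps)
    finally show ?thesis .
  qed
  obtain u v where uv: "(u, v) \<noteq> (0, 0)" and r1: "(T q - e) * u + P q * v = 0"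
      and r2: "T (Suc q) * u + (P (Suc q) - e) * v = 0"
    using kernel2[OF det] by blast
  define psi where "psi n = u * T n + v * P n" for n
  have an: "a (int k + 1) \<noteq> 0" for k using apos by (metis less_irrefl)
  have rec: "of_real (a (int k)) * psi k + of_real (b (int k + 1)) * psi (Suc k)
        + of_real (a (int k + 1)) * psi (Suc (Suc k)) = z * psi (Suc k)" for k
  proof -
    have t: "of_real (a (int k)) * T k + of_real (b (int k + 1)) * T (Suc k)
        + of_real (a (int k + 1)) * T (Suc (Suc k)) = z * T (Suc k)"
      unfolding T_def jtheta_def by (rule cev_jsol_rec[where a=a, OF an[of k]])
    have p: "of_real (a (int k)) * P k + of_real (b (int k + 1)) * P (Suc k)
        + of_real (a (int k + 1)) * P (Suc (Suc k)) = z * P (Suc k)"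
      unfolding P_def jphi_def by (rule cev_jsol_rec[where a=a, OF an[of k]])
    have "of_real (a (int k)) * psi k + of_real (b (int k + 1)) * psi (Suc k)
        + of_real (a (int k + 1)) * psi (Suc (Suc k))
        = u * (of_real (a (int k)) * T k + of_real (b (int k + 1)) * T (Suc k)
        + of_real (a (int k + 1)) * T (Suc (Suc k)))
        + v * (of_real (a (int k)) * P k + of_real (b (int k + 1)) * P (Suc k)
        + of_real (a (int k + 1)) * P (Suc (Suc k)))"
      unfolding psi_def by (simp add: algebra_simps)
    also have "\<dots> = z * psi (Suc k)" unfolding t p psi_def by (simp add: algebra_simps)
    finally show ?thesis .
  qed
  have T0: "T 0 = 1" and P0: "P 0 = 0" and T1: "T 1 = 0" and P1: "P 1 = 1"
    by (simp_all add: T_def P_def jtheta_def jphi_def cev_def)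
  have psi0: "psi 0 = u" and psi1: "psi 1 = v" using T0 P0 T1 P1 by (simp_all add: psi_def)
  have pq: "psi q = of_real eps * psi 0"
    using r1 unfolding psi_def psi0 e_def[symmetric] by (simp add: algebra_simps T0 P0)
  have pq1: "psi (Suc q) = of_real eps * psi 1"
    using r2 psi1 unfolding psi_def e_def[symmetric] by (simp add: algebra_simps)
  have g: "(z - cnj z) * (\<Sum>k<q. psi (Suc k) * cnj (psi (Suc k))) = 0"
    by (rule green[where a=a and b=b, OF rec pq pq1 _ aq]) (use eps in auto)
  have nz: "(\<Sum>k<q. psi (Suc k) * cnj (psi (Suc k))) \<noteq> 0"
  proof
    assume "(\<Sum>k<q. psi (Suc k) * cnj (psi (Suc k))) = 0"
    then have "(\<Sum>k<q. complex_of_real ((cmod (psi (Suc k)))\<^sup>2)) = 0"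
      by (simp only: complex_norm_square)
    then have "complex_of_real (\<Sum>k<q. (cmod (psi (Suc k)))\<^sup>2) = 0" by simp
    then have "(\<Sum>k<q. (cmod (psi (Suc k)))\<^sup>2) = 0" by (simp only: of_real_eq_0_iff)
    then have "\<forall>k\<in>{..<q}. (cmod (psi (Suc k)))\<^sup>2 = 0"
      by (subst sum_nonneg_eq_0_iff[symmetric]) auto
    then have z1: "psi 1 = 0" and z2: "psi 2 = 0" using q2
      by (auto dest!: bspec[of _ _ 0] bspec[of _ _ 1] simp: numeral_2_eq_2)
    have "of_real (a 0) * psi 0 = 0" using rec[of 0] z1 z2 by (simp add: numeral_2_eq_2)
    then have "psi 0 = 0" using a0 by simp
    then show False using uv z1 psi0 psi1 by simp
  qed
  have "z = cnj z" using g nz by simp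
  then show ?thesis by (metis complex_cnj_cancel_iff complex_cnj_zero_iff complex_is_Real_iff
      Reals_cnj_iff)
qed

lemma jsol_deg:
  assumes apos: "\<forall>n. a n > 0" and d0: "degree p0 = 0" and d1: "degree p1 = 0"
  shows "degree (jsol a b p0 p1 n) \<le> n - 1 \<and>
    (n \<ge> 1 \<longrightarrow> coeff (jsol a b p0 p1 n) (n - 1) = coeff p1 0 / (\<Prod>k\<in>{1..n-1}. a (int k)))"
proof -
  have "\<forall>m\<le>n. degree (jsol a b p0 p1 m) \<le> m - 1 \<and>
    (m \<ge> 1 \<longrightarrow> coeff (jsol a b p0 p1 m) (m - 1) = coeff p1 0 / (\<Prod>k\<in>{1..m-1}. a (int k)))"
  proof (induction n)
    case 0
    then show ?case using d0 by simp
  next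
    case (Suc n)
    show ?case
    proof (intro allI impI)
      fix m assume m: "m \<le> Suc n"
      show "degree (jsol a b p0 p1 m) \<le> m - 1 \<and>
        (m \<ge> 1 \<longrightarrow> coeff (jsol a b p0 p1 m) (m - 1) = coeff p1 0 / (\<Prod>k\<in>{1..m-1}. a (int k)))"
      proof (cases "m \<le> n")
        case True then show ?thesis using Suc.IH by blast
      next
        case False
        then have mn: "m = Suc n" using m by simp
        show ?thesis
        proof (cases n)
          case 0
          then show ?thesis using mn d1 by simp
        next
          case (Suc k)
          define J0 where "J0 = jsol a b p0 p1 k"
          define J1 where "J1 = jsol a b p0 p1 (Suc k)"
          have IH0: "degree J0 \<le> k - 1" using Suc.IH Suc unfolding J0_def by auto
          have IH1: "degree J1 \<le> k" and c1: "coeff J1 k = coeff p1 0 / (\<Prod>k\<in>{1..k}. a (int k))"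
            using Suc.IH Suc unfolding J1_def by auto
          have J2: "jsol a b p0 p1 m = smult (1 / a (int k + 1))
              (smult (- b (int k + 1)) J1 + pCons 0 J1 - smult (a (int k)) J0)"
            using mn Suc by (simp add: J0_def J1_def)
          have "degree (smult (- b (int k + 1)) J1 + pCons 0 J1 - smult (a (int k)) J0) \<le> Suc k"
          proof -
            have "degree (pCons 0 J1) \<le> Suc k" using IH1
              by (metis Suc_le_mono degree_pCons_le le_trans)
            moreover have "degree (smult (- b (int k + 1)) J1) \<le> Suc k"
              using IH1 degree_smult_le le_trans by (metis le_SucI)
            moreover have "degree (smult (a (int k)) J0) \<le> Suc k"
              using IH0 degree_smult_le le_trans by (metis diff_le_self le_SucI)
            ultimately show ?thesis
              by (meson degree_add_le degree_diff_le)
          qed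
          then have deg: "degree (jsol a b p0 p1 m) \<le> m - 1" unfolding J2 using mn Suc
            by (metis degree_smult_le diff_Suc_1 le_trans)
          have z1: "coeff J1 (Suc k) = 0" using IH1 by (simp add: coeff_eq_0)
          have z0: "coeff J0 (Suc k) = 0" using IH0 by (simp add: coeff_eq_0)
          have "coeff (jsol a b p0 p1 m) (m - 1) = coeff J1 k / a (int k + 1)"
            unfolding J2 using mn Suc z1 z0 by simp
          also have "\<dots> = coeff p1 0 / (\<Prod>k\<in>{1..m-1}. a (int k))"
            using mn Suc c1 by (simp add: prod.cl_ivl_Suc add.commute)
          finally show ?thesis using deg by simp
        qed
      qed
    qed
  qed
  then show ?thesis by simp
qed

lemma discr_deg:
  assumes apos: "\<forall>n. a n > 0" and q1: "q \<ge> 1"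
  shows "degree (discr a b q) = q" "coeff (discr a b q) q = 1 / (\<Prod>k\<in>{1..q}. a (int k))"
proof -
  have p: "degree (jphi a b (Suc q)) \<le> q" "coeff (jphi a b (Suc q)) q = 1 / (\<Prod>k\<in>{1..q}. a (int k))"
    using jsol_deg[OF apos, of 0 1 b "Suc q"] by (simp_all add: jphi_def)
  have t: "degree (jtheta a b q) \<le> q - 1"
    using jsol_deg[OF apos, of 1 0 b q] by (simp_all add: jtheta_def)
  then have t0: "coeff (jtheta a b q) q = 0" using q1 by (intro coeff_eq_0) simp
  show c: "coeff (discr a b q) q = 1 / (\<Prod>k\<in>{1..q}. a (int k))"
    using p t0 by (simp add: discr_def)
  have "degree (discr a b q) \<le> q" unfolding discr_def using p t q1
    by (metis Suc_eq_plus1 degree_add_le diff_le_self le_trans)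
  moreover have pos: "(\<Prod>k\<in>{1..q}. a (int k)) > 0" using apos by (intro prod_pos) auto
  then have "coeff (discr a b q) q \<noteq> 0" using c by (metis divide_eq_0_iff less_irrefl one_neq_zero)
  then have "q \<le> degree (discr a b q)" by (rule le_degree)
  ultimately show "degree (discr a b q) = q" by simp
qed

abbreviation lprod :: "real list \<Rightarrow> real poly" where
  "lprod xs \<equiv> (\<Prod>x\<leftarrow>xs. [:- x, 1:])"

lemma lprod_mset: "lprod xs = (\<Prod>x\<in>#mset xs. [:- x, 1:])"
  by (simp add: prod_mset_prod_list[symmetric] mset_map)

lemma lprod_nz: "lprod xs \<noteq> 0"
proof (induction xs)
  case (Cons x xs)
  have "[:- x, 1:] \<noteq> (0 :: real poly)" by simp
  then show ?case using Cons by (simp only: list.map prod_list.Cons mult_eq_0_iff de_Morgan_disj) simp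
qed simp

lemma degree_lprod: "degree (lprod xs) = length xs"
proof (induction xs)
  case (Cons x xs)
  have "degree ([:- x, 1:] * lprod xs) = 1 + length xs"
    using lprod_nz[of xs] Cons by (subst degree_mult_eq) auto
  then show ?case by simp
qed simp

lemma poly_lprod_zero: "poly (lprod xs) y = 0 \<longleftrightarrow> y \<in> set xs"
  by (induction xs) auto

lemma lprod_unique: "lprod xs = lprod ys \<Longrightarrow> mset xs = mset ys"
proof (induction xs arbitrary: ys)
  case Nil
  then have "length ys = 0" using degree_lprod[of ys] by simp
  then show ?case by simp
next
  case (Cons x xs)
  have "poly (lprod ys) x = 0" using Cons.prems[symmetric] by simp
  then have xin: "x \<in> set ys" using poly_lprod_zero by blast
  have my: "mset ys = add_mset x (mset (remove1 x ys))" using xin by simp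
  have "lprod ys = [:- x, 1:] * lprod (remove1 x ys)"
    unfolding lprod_mset my by simp
  then have "[:- x, 1:] * lprod xs = [:- x, 1:] * lprod (remove1 x ys)"
    using Cons.prems by simp
  then have "lprod xs = lprod (remove1 x ys)"
    by (metis mult_left_cancel pCons_eq_0_iff one_neq_zero)
  then have mx: "mset xs = mset (remove1 x ys)" by (rule Cons.IH)
  show ?case by (simp only: mset.simps(2) mx my)
qed

lemma real_split:
  fixes p :: "real poly"
  assumes "\<And>z. cev p z = 0 \<Longrightarrow> Im z = 0" and "p \<noteq> 0"
  shows "\<exists>xs. length xs = degree p \<and> p = smult (lead_coeff p) (lprod xs)"
  using assms
proof (induction "degree p" arbitrary: p rule: less_induct)
  case less
  show ?case
  proof (cases "degree p = 0")
    case True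
    then show ?thesis by (intro exI[of _ "[]"]) (auto elim: degree_eq_zeroE)
  next
    case False
    have "degree (map_poly complex_of_real p) = degree p" by (rule degree_map_poly) simp
    then have "\<not> constant (poly (map_poly complex_of_real p))" using False
      by (simp add: constant_degree)
    then obtain z where "poly (map_poly complex_of_real p) z = 0"
      using fundamental_theorem_of_algebra by blast
    then have cz: "cev p z = 0" by (simp add: cev_def)
    then have "Im z = 0" using less.prems by blast
    then have "z = of_real (Re z)" by (simp add: complex_eq_iff)
    then have "poly p (Re z) = 0" using cz cev_of_real by (metis of_real_eq_0_iff)
    then obtain r where pr: "p = [:- Re z, 1:] * r" using poly_eq_0_iff_dvd by blast
    have rnz: "r \<noteq> 0" using pr less.prems by auto
    have "degree ([:- Re z, 1:] * r) = degree [:- Re z, 1:] + degree r"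
      by (rule degree_mult_eq) (use rnz in auto)
    then have dr: "degree p = degree r + 1" using pr by simp
    have rr: "Im w = 0" if "cev r w = 0" for w
    proof -
      have "cev p w = cev [:- Re z, 1:] w * cev r w" unfolding pr by (rule cev_mult)
      then show ?thesis using less.prems(1)[of w] that by simp
    qed
    obtain ys where ys: "length ys = degree r" "r = smult (lead_coeff r) (lprod ys)"
      using less.hyps[of r] dr rr rnz by auto
    have "lead_coeff ([:- Re z, 1:] * r) = lead_coeff [:- Re z, 1:] * lead_coeff r"
      by (rule lead_coeff_mult)
    then have lc: "lead_coeff p = lead_coeff r" using pr by simp
    have l: "lprod (Re z # ys) = [:- Re z, 1:] * lprod ys" by (simp only: list.map prod_list.Cons)
    have "p = smult (lead_coeff p) (lprod (Re z # ys))"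
      unfolding l lc using pr ys(2) by (metis mult_smult_right)
    then show ?thesis using ys dr by (intro exI[of _ "Re z # ys"]) simp
  qed
qed

lemma sorted_roots_eq:
  assumes "p = smult (lead_coeff p) (lprod xs)" "p \<noteq> 0"
  shows "sorted_roots p = sort xs"
  unfolding sorted_roots_def
proof (rule the_equality)
  have "lprod (sort xs) = lprod xs" unfolding lprod_mset by simp
  then show "sorted (sort xs) \<and> p = smult (lead_coeff p) (lprod (sort xs))" using assms by simp
next
  fix ys assume ys: "sorted ys \<and> p = smult (lead_coeff p) (lprod ys)"
  have l: "lead_coeff p \<noteq> 0" using assms by simp
  have "lprod ys = lprod xs" using ys assms(1) smult_cancel[OF l] by metis
  then have "mset ys = mset xs" by (rule lprod_unique)
  then show "ys = sort xs" using ys properties_for_sort by metis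
qed

definition Fq :: "(nat \<Rightarrow> nat \<Rightarrow> real) \<Rightarrow> nat \<Rightarrow> (nat \<Rightarrow> real) \<Rightarrow> real" where
  "Fq K q w = (\<Sum>i<q. \<Sum>j<q. K i j * w i * w j)"

definition Nq :: "nat \<Rightarrow> (nat \<Rightarrow> real) \<Rightarrow> real" where
  "Nq q w = (\<Sum>i<q. (w i)\<^sup>2)"

lemma Fq_cont: "continuous_on S (Fq K q)"
  unfolding Fq_def
  by (intro continuous_intros continuous_on_subset[OF continuous_on_product_coordinates]) auto

lemma Nq_cont: "continuous_on S (Nq q)"
  unfolding Nq_def
  by (intro continuous_intros continuous_on_subset[OF continuous_on_product_coordinates]) auto

lemma Fq_scale: "Fq K q (\<lambda>i. c * w i) = c\<^sup>2 * Fq K q w"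
  unfolding Fq_def by (simp add: sum_distrib_left power2_eq_square algebra_simps)

lemma Nq_scale: "Nq q (\<lambda>i. c * w i) = c\<^sup>2 * Nq q w"
  unfolding Nq_def by (simp add: sum_distrib_left power2_eq_square algebra_simps)

lemma Nq_nonneg: "Nq q w \<ge> 0"
  unfolding Nq_def by (intro sum_nonneg) auto

lemma Nq_zero: "Nq q w = 0 \<Longrightarrow> i < q \<Longrightarrow> w i = 0"
  unfolding Nq_def by (subst (asm) sum_nonneg_eq_0_iff) auto

lemma Fq_zero: "(\<And>i. i < q \<Longrightarrow> w i = 0) \<Longrightarrow> Fq K q w = 0"
  unfolding Fq_def by simp

lemma delta_sum:
  fixes q k :: nat
  assumes "k < q"
  shows "(\<Sum>j<q. f j * (if j = k then 1 else 0)) = (f k :: real)"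
proof -
  have "(\<Sum>j<q. f j * (if j = k then 1 else 0)) = (\<Sum>j<q. if j = k then f k else 0)"
    by (intro sum.cong) auto
  then show ?thesis using assms by (simp add: sum.delta)
qed

lemma ray_max:
  assumes q1: "q \<ge> 1"
  shows "\<exists>lam w. Nq q w = 1 \<and> Fq K q w = lam \<and> (\<forall>v. Fq K q v \<le> lam * Nq q v)"
proof -
  define B where "B = PiE UNIV (\<lambda>i::nat. if i < q then {-1..1::real} else {0})"
  have "compactin (product_topology (\<lambda>i. euclidean) UNIV) B"
    unfolding B_def by (subst compactin_PiE) auto
  then have cB: "compact B" by (metis compactin_euclidean_iff euclidean_product_topology)
  define S where "S = B \<inter> {w. Nq q w = 1}"
  have "closed {w. Nq q w = 1}"
    by (rule closed_Collect_eq) (auto intro: Nq_cont)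
  then have cS: "compact S" unfolding S_def using cB by (rule compact_Int_closed[rotated])
  define e where "e = (\<lambda>i::nat. if i = 0 then 1 else (0::real))"
  have "Nq q e = (\<Sum>i<q. 1 * e i)" unfolding Nq_def by (intro sum.cong refl) (simp add: e_def)
  also have "\<dots> = 1" unfolding e_def by (rule delta_sum) (use q1 in simp)
  finally have "e \<in> S" unfolding S_def B_def using q1
    by (auto simp: PiE_def extensional_def e_def)
  then have "S \<noteq> {}" by auto
  then obtain w where wS: "w \<in> S" and wmax: "\<forall>y\<in>S. Fq K q y \<le> Fq K q w"
    using continuous_attains_sup[OF cS _ Fq_cont] by blast
  have Nw: "Nq q w = 1" using wS unfolding S_def by simp
  have "Fq K q v \<le> Fq K q w * Nq q v" for v
  proof (cases "Nq q v = 0")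
    case True
    then show ?thesis using Fq_zero[of q v K] Nq_zero[of q v] by simp
  next
    case False
    then have Np: "Nq q v > 0" using Nq_nonneg[of q v] by simp
    define c where "c = 1 / sqrt (Nq q v)"
    define u where "u i = (if i < q then c * v i else 0)" for i
    have "Nq q u = Nq q (\<lambda>i. c * v i)" unfolding Nq_def u_def by simp
    also have "\<dots> = 1" using Np unfolding Nq_scale c_def by (simp add: power_divide)
    finally have Nu: "Nq q u = 1" .
    have Fu: "Fq K q u = c\<^sup>2 * Fq K q v"
    proof -
      have "Fq K q u = Fq K q (\<lambda>i. c * v i)" unfolding Fq_def u_def by simp
      then show ?thesis by (simp add: Fq_scale)
    qed
    have uS: "u \<in> S"
    proof -
      have "\<bar>u i\<bar> \<le> 1" if "i < q" for i
      proof -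
        have "(u i)\<^sup>2 \<le> Nq q u" unfolding Nq_def
          using that by (intro member_le_sum) auto
        then have "(u i)\<^sup>2 \<le> 1" using Nu by simp
        then show ?thesis by (simp add: abs_square_le_1)
      qed
      then show ?thesis unfolding S_def B_def using Nu
        by (auto simp: PiE_def extensional_def u_def abs_le_iff)
    qed
    have "c\<^sup>2 * Fq K q v \<le> Fq K q w" using wmax uS Fu by auto
    moreover have "c\<^sup>2 = 1 / Nq q v" using Np unfolding c_def by (simp add: power_divide)
    ultimately show ?thesis using Np by (simp add: field_simps)
  qed
  then show ?thesis using Nw by blast
qed

lemma Fq_expand:
  "Fq K q (\<lambda>i. w i + t * u i) = Fq K q w + t * (\<Sum>i<q. \<Sum>j<q. K i j * (w i * u j + u i * w j)) + t\<^sup>2 * Fq K q u"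
  unfolding Fq_def
  by (simp add: algebra_simps sum.distrib sum_distrib_left power2_eq_square)

lemma Nq_expand:
  "Nq q (\<lambda>i. w i + t * u i) = Nq q w + t * (\<Sum>i<q. 2 * w i * u i) + t\<^sup>2 * Nq q u"
  unfolding Nq_def
  by (simp add: algebra_simps sum.distrib sum_distrib_left power2_eq_square)

lemma quad_nonpos:
  fixes bb gg :: real
  assumes "\<forall>t. 2 * t * bb + t\<^sup>2 * gg \<le> 0"
  shows "bb = 0"
proof (rule ccontr)
  assume nz: "bb \<noteq> 0"
  define g where "g = \<bar>gg\<bar> + 1"
  have g1: "g \<ge> 1" unfolding g_def by simp
  define t where "t = bb / g"
  have "2 * t * bb + t\<^sup>2 * gg \<le> 0" using assms by blast
  then have "g\<^sup>2 * (2 * t * bb + t\<^sup>2 * gg) \<le> 0" by (simp add: mult_nonneg_nonpos)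
  moreover have "g\<^sup>2 * (2 * t * bb + t\<^sup>2 * gg) = bb\<^sup>2 * (2 * g + gg)"
    unfolding t_def using g1 by (simp add: field_simps power2_eq_square)
  moreover have "2 * g + gg > 0" unfolding g_def by (cases "gg \<ge> 0") (simp_all add: abs_if)
  moreover have "bb\<^sup>2 > 0" using nz by simp
  ultimately show False by (metis mult_pos_pos not_le)
qed

lemma ray_kernel:
  assumes sym: "\<And>i j. i < q \<Longrightarrow> j < q \<Longrightarrow> K i j = K j i"
    and le: "\<forall>v. Fq K q v \<le> lam * Nq q v"
    and eq: "Fq K q w = lam * Nq q w"
    and k: "k < q"
  shows "(\<Sum>j<q. K k j * w j) = lam * w k"
proof -
  define u where "u i = (if i = k then 1 else (0::real))" for i
  define bb where "bb = (\<Sum>j<q. K k j * w j) - lam * w k"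
  have s1: "(\<Sum>i<q. \<Sum>j<q. K i j * (w i * u j + u i * w j)) = 2 * (\<Sum>j<q. K k j * w j)"
  proof -
    have "(\<Sum>i<q. \<Sum>j<q. K i j * (w i * u j + u i * w j))
        = (\<Sum>i<q. \<Sum>j<q. (K i j * w i) * u j + (K i j * w j) * u i)"
      by (intro sum.cong refl) (simp add: algebra_simps)
    also have "\<dots> = (\<Sum>i<q. \<Sum>j<q. (K i j * w i) * u j) + (\<Sum>i<q. \<Sum>j<q. (K i j * w j) * u i)"
      by (simp only: sum.distrib)
    also have "(\<Sum>i<q. \<Sum>j<q. (K i j * w j) * u i) = (\<Sum>j<q. \<Sum>i<q. (K i j * w j) * u i)"
      by (rule sum.swap)
    also have "(\<Sum>i<q. \<Sum>j<q. (K i j * w i) * u j) = (\<Sum>i<q. K i k * w i)"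
      unfolding u_def by (intro sum.cong refl) (rule delta_sum[OF k])
    also have "(\<Sum>j<q. \<Sum>i<q. (K i j * w j) * u i) = (\<Sum>j<q. K k j * w j)"
      unfolding u_def by (intro sum.cong refl) (rule delta_sum[OF k])
    finally have "(\<Sum>i<q. \<Sum>j<q. K i j * (w i * u j + u i * w j))
        = (\<Sum>i<q. K i k * w i) + (\<Sum>j<q. K k j * w j)" .
    also have "(\<Sum>i<q. K i k * w i) = (\<Sum>j<q. K k j * w j)"
      using sym k by (intro sum.cong) auto
    finally show ?thesis by simp
  qed
  have s2: "(\<Sum>i<q. 2 * w i * u i) = 2 * w k" unfolding u_def by (rule delta_sum[OF k])
  have Fu: "Fq K q u = K k k"
  proof -
    have "Fq K q u = (\<Sum>i<q. (\<Sum>j<q. (K i j * u i) * u j))" unfolding Fq_def by simp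
    also have "\<dots> = (\<Sum>i<q. K i k * u i)"
      by (intro sum.cong refl) (unfold u_def, rule delta_sum[OF k])
    also have "\<dots> = K k k" unfolding u_def by (rule delta_sum[OF k])
    finally show ?thesis .
  qed
  have Nu: "Nq q u = 1"
  proof -
    have "Nq q u = (\<Sum>i<q. 1 * u i)" unfolding Nq_def by (intro sum.cong refl) (simp add: u_def)
    also have "\<dots> = 1" unfolding u_def by (rule delta_sum[OF k])
    finally show ?thesis .
  qed
  have "\<forall>t. 2 * t * bb + t\<^sup>2 * (K k k - lam) \<le> 0"
  proof
    fix t
    have "Fq K q (\<lambda>i. w i + t * u i) \<le> lam * Nq q (\<lambda>i. w i + t * u i)" using le by blast
    then have "Fq K q w + t * (2 * (\<Sum>j<q. K k j * w j)) + t\<^sup>2 * K k k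
        \<le> lam * (Nq q w + t * (2 * w k) + t\<^sup>2 * 1)"
      unfolding Fq_expand Nq_expand s1 s2 Fu Nu .
    then show "2 * t * bb + t\<^sup>2 * (K k k - lam) \<le> 0"
      using eq unfolding bb_def by (simp add: algebra_simps)
  qed
  then have "bb = 0" by (rule quad_nonpos)
  then show ?thesis unfolding bb_def by simp
qed

definition dl :: "nat \<Rightarrow> nat \<Rightarrow> real" where "dl x y = (if x = y then 1 else 0)"

lemma delta_dl: "k < q \<Longrightarrow> (\<Sum>j<q. f j * dl j k) = f k"
  unfolding dl_def by (rule delta_sum)

definition Kj :: "(int \<Rightarrow> real) \<Rightarrow> (int \<Rightarrow> real) \<Rightarrow> nat \<Rightarrow> nat \<Rightarrow> nat \<Rightarrow> real" where
  "Kj a b q i j = b (int i) * dl j i + a (int i) * dl j (Suc i mod q) + a (int j) * dl i (Suc j mod q)"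

lemma Kj_sym: "Kj a b q i j = Kj a b q j i"
  unfolding Kj_def dl_def by auto

lemma Fq_Kj:
  assumes q: "q > 0"
  shows "Fq (Kj a b q) q v = (\<Sum>i<q. b (int i) * (v i)\<^sup>2) + 2 * (\<Sum>i<q. a (int i) * v i * v (Suc i mod q))"
proof -
  have s: "Suc i mod q < q" for i using q by simp
  have "Fq (Kj a b q) q v = (\<Sum>i<q. \<Sum>j<q. (b (int i) * v i * v j) * dl j i)
     + (\<Sum>i<q. \<Sum>j<q. (a (int i) * v i * v j) * dl j (Suc i mod q))
     + (\<Sum>i<q. \<Sum>j<q. (a (int j) * v i * v j) * dl i (Suc j mod q))"
    unfolding Fq_def Kj_def by (simp add: sum.distrib algebra_simps)
  also have "(\<Sum>i<q. \<Sum>j<q. (b (int i) * v i * v j) * dl j i) = (\<Sum>i<q. b (int i) * (v i)\<^sup>2)"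
    by (intro sum.cong refl) (simp add: delta_dl power2_eq_square)
  also have "(\<Sum>i<q. \<Sum>j<q. (a (int i) * v i * v j) * dl j (Suc i mod q))
      = (\<Sum>i<q. a (int i) * v i * v (Suc i mod q))"
    by (intro sum.cong refl) (rule delta_dl[OF s])
  also have "(\<Sum>i<q. \<Sum>j<q. (a (int j) * v i * v j) * dl i (Suc j mod q))
      = (\<Sum>j<q. \<Sum>i<q. (a (int j) * v i * v j) * dl i (Suc j mod q))"
    by (rule sum.swap)
  also have "\<dots> = (\<Sum>j<q. a (int j) * v (Suc j mod q) * v j)"
    by (intro sum.cong refl) (rule delta_dl[OF s])
  finally show ?thesis by (simp add: algebra_simps)
qed

lemma suc_mod_eq: "j < q \<Longrightarrow> Suc j mod q = (if Suc j = q then 0 else Suc j)"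
  by auto

lemma suc_mod_inj: "j < q \<Longrightarrow> j' < q \<Longrightarrow> Suc j mod q = Suc j' mod q \<Longrightarrow> j = j'"
  by (simp add: suc_mod_eq split: if_splits)

lemma pred_mod:
  fixes q k :: nat
  assumes q: "q > 0" and j: "j < q"
  shows "(Suc k mod q = Suc j mod q) \<longleftrightarrow> j = k mod q"
proof -
  have "Suc k mod q = Suc (k mod q) mod q" by (simp add: mod_Suc_eq)
  then show ?thesis using suc_mod_inj[OF j, of "k mod q"] q j by auto
qed

lemma Kj_row:
  assumes q: "q > 0" and i: "i < q"
  shows "(\<Sum>j<q. Kj a b q i j * v j) = b (int i) * v i + a (int i) * v (Suc i mod q)
     + (\<Sum>j<q. (a (int j) * v j) * dl i (Suc j mod q))"
proof -
  have s: "Suc i mod q < q" using q by simp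
  have "(\<Sum>j<q. Kj a b q i j * v j) = (\<Sum>j<q. (b (int i) * v j) * dl j i)
     + (\<Sum>j<q. (a (int i) * v j) * dl j (Suc i mod q))
     + (\<Sum>j<q. (a (int j) * v j) * dl i (Suc j mod q))"
    unfolding Kj_def by (simp add: sum.distrib algebra_simps)
  also have "(\<Sum>j<q. (b (int i) * v j) * dl j i) = b (int i) * v i" by (rule delta_dl[OF i])
  also have "(\<Sum>j<q. (a (int i) * v j) * dl j (Suc i mod q)) = a (int i) * v (Suc i mod q)"
    by (rule delta_dl[OF s])
  finally show ?thesis .
qed

lemma Kj_row_pred:
  assumes q: "q > 0"
  shows "(\<Sum>j<q. (a (int j) * v j) * dl (Suc k mod q) (Suc j mod q)) = a (int (k mod q)) * v (k mod q)"
proof -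
  have "(\<Sum>j<q. (a (int j) * v j) * dl (Suc k mod q) (Suc j mod q)) = (\<Sum>j<q. (a (int j) * v j) * dl j (k mod q))"
    by (intro sum.cong refl) (use pred_mod[OF q] in \<open>auto simp: dl_def\<close>)
  also have "\<dots> = a (int (k mod q)) * v (k mod q)" by (rule delta_dl) (use q in simp)
  finally show ?thesis .
qed

lemma per_nat:
  assumes per: "\<forall>n. a (n + int q) = a n"
  shows "a (int n) = a (int (n mod q))"
proof -
  have m: "a (x + int q * int m) = a x" for x m
  proof (induction m)
    case (Suc m)
    have "a (x + int q * int (Suc m)) = a ((x + int q * int m) + int q)" by (simp add: algebra_simps)
    also have "\<dots> = a (x + int q * int m)" using per by simp
    finally show ?case using Suc by simp
  qed simp
  have "int n = int (n mod q) + int q * int (n div q)"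
    by (metis of_nat_add of_nat_mult mod_mult_div_eq add.commute)
  then show ?thesis using m by metis
qed

lemma sol_formula:
  assumes apos: "\<forall>n. a n > 0"
    and rec: "\<And>k. a (int k) * psi k + b (int k + 1) * psi (Suc k) + a (int k + 1) * psi (Suc (Suc k)) = lam * psi (Suc k)"
  shows "psi n = psi 0 * poly (jtheta a b n) lam + psi 1 * poly (jphi a b n) lam"
proof (induction n rule: nat_less_induct)
  case (1 n)
  show ?case
  proof (cases n)
    case 0 then show ?thesis by (simp add: jtheta_def jphi_def)
  next
    case (Suc m)
    show ?thesis
    proof (cases m)
      case 0 then show ?thesis using Suc by (simp add: jtheta_def jphi_def)
    next
      case (Suc k)
      have n: "n = Suc (Suc k)" using Suc \<open>n = Suc m\<close> by simp
      have an: "a (int k + 1) \<noteq> 0" using apos by (metis less_irrefl)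
      have lk: "k < n" "Suc k < n" using n by simp_all
      have i0: "psi k = psi 0 * poly (jtheta a b k) lam + psi 1 * poly (jphi a b k) lam"
        using "1" lk(1) by blast
      have i1: "psi (Suc k) = psi 0 * poly (jtheta a b (Suc k)) lam + psi 1 * poly (jphi a b (Suc k)) lam"
        using "1" lk(2) by blast
      have t: "a (int k + 1) * poly (jtheta a b (Suc (Suc k))) lam =
         (lam - b (int k + 1)) * poly (jtheta a b (Suc k)) lam - a (int k) * poly (jtheta a b k) lam"
        unfolding jtheta_def by (rule poly_jsol_rec[where a=a, OF an])
      have p: "a (int k + 1) * poly (jphi a b (Suc (Suc k))) lam =
         (lam - b (int k + 1)) * poly (jphi a b (Suc k)) lam - a (int k) * poly (jphi a b k) lam"
        unfolding jphi_def by (rule poly_jsol_rec[where a=a, OF an])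
      have r: "a (int k + 1) * psi (Suc (Suc k)) = (lam - b (int k + 1)) * psi (Suc k) - a (int k) * psi k"
        using rec[of k] by (simp add: algebra_simps)
      have "a (int k + 1) * psi (Suc (Suc k)) = a (int k + 1) *
          (psi 0 * poly (jtheta a b (Suc (Suc k))) lam + psi 1 * poly (jphi a b (Suc (Suc k))) lam)"
        unfolding r distrib_left mult.left_commute[of "a (int k + 1)"] t p i0 i1
        by (simp add: algebra_simps)
      then show ?thesis using an n by simp
    qed
  qed
qed

lemma sol_root:
  assumes apos: "\<forall>n. a n > 0" and aq: "a (int q) = a 0"
    and rec: "\<And>k. a (int k) * psi k + b (int k + 1) * psi (Suc k) + a (int k + 1) * psi (Suc (Suc k)) = lam * psi (Suc k)"
    and pq: "psi q = eps * psi 0" and pq1: "psi (Suc q) = eps * psi 1" and ee: "eps * eps = 1"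
    and nz: "(psi 0, psi 1) \<noteq> (0, 0)"
  shows "poly ((discr a b q)\<^sup>2 - 4) lam = 0"
proof -
  define T where "T n = poly (jtheta a b n) lam" for n
  define P where "P n = poly (jphi a b n) lam" for n
  have a0: "a 0 > 0" using apos by simp
  have W: "T q * P (Suc q) - T (Suc q) * P q = 1"
  proof -
    have "poly (smult (a (int q)) (jtheta a b q * jphi a b (Suc q) - jtheta a b (Suc q) * jphi a b q)) lam
        = poly [:a 0:] lam" using wronski[OF apos] by metis
    then have "a (int q) * (T q * P (Suc q) - T (Suc q) * P q) = a 0" by (simp add: T_def P_def)
    then show ?thesis using aq a0 by simp
  qed
  have f: "psi n = psi 0 * T n + psi 1 * P n" for n
    unfolding T_def P_def by (rule sol_formula[OF apos rec])
  have e1: "(T q - eps) * psi 0 + P q * psi 1 = 0" using f[of q] pq by (simp add: algebra_simps)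
  have e2: "T (Suc q) * psi 0 + (P (Suc q) - eps) * psi 1 = 0" using f[of "Suc q"] pq1 by (simp add: algebra_simps)
  define det where "det = (T q - eps) * (P (Suc q) - eps) - P q * T (Suc q)"
  have "det * psi 0 = (P (Suc q) - eps) * ((T q - eps) * psi 0 + P q * psi 1) - P q * (T (Suc q) * psi 0 + (P (Suc q) - eps) * psi 1)"
    unfolding det_def by (simp add: algebra_simps)
  then have d0: "det * psi 0 = 0" using e1 e2 by simp
  have "det * psi 1 = (T q - eps) * (T (Suc q) * psi 0 + (P (Suc q) - eps) * psi 1) - T (Suc q) * ((T q - eps) * psi 0 + P q * psi 1)"
    unfolding det_def by (simp add: algebra_simps)
  then have d1: "det * psi 1 = 0" using e1 e2 by simp
  have "det = 0" using d0 d1 nz by auto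
  moreover have "det = (T q * P (Suc q) - T (Suc q) * P q) - eps * (P (Suc q) + T q) + eps * eps"
    unfolding det_def by (simp add: algebra_simps)
  ultimately have "eps * (P (Suc q) + T q) = 2" using W ee by simp
  then have "(P (Suc q) + T q) = 2 * eps" using ee by (metis mult.left_commute mult.right_neutral)
  then have "(P (Suc q) + T q)\<^sup>2 = 4" using ee by (simp add: power2_eq_square algebra_simps)
  then show ?thesis by (simp add: discr_def T_def P_def)
qed

lemma eig_root:
  assumes q2: "q \<ge> 2" and apos: "\<forall>n. a n > 0"
    and aper: "\<forall>n. a (n + int q) = a n" and bper: "\<forall>n. b (n + int q) = b n"
    and sig: "sig * sig = 1"
    and eig: "\<And>i. i < q \<Longrightarrow> (\<Sum>j<q. Kj a (\<lambda>n. sig * b n) q i j * v j) = lam * v i"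
    and Nv: "Nq q v = 1"
  shows "poly ((discr a b q)\<^sup>2 - 4) (sig * lam) = 0"
proof -
  have q0: "q > 0" using q2 by simp
  define psi where "psi n = sig ^ n * v (n mod q)" for n
  have rec: "a (int k) * psi k + b (int k + 1) * psi (Suc k) + a (int k + 1) * psi (Suc (Suc k))
      = (sig * lam) * psi (Suc k)" for k
  proof -
    define i where "i = Suc k mod q"
    have i: "i < q" using q0 unfolding i_def by simp
    have row: "(sig * b (int i)) * v i + a (int i) * v (Suc i mod q) + a (int (k mod q)) * v (k mod q) = lam * v i"
      using eig[OF i] Kj_row[OF q0 i, of a "\<lambda>n. sig * b n" v] Kj_row_pred[OF q0, of a v k]
      unfolding i_def by simp
    have si: "Suc i mod q = Suc (Suc k) mod q" unfolding i_def by (simp add: mod_Suc_eq)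
    have ak: "a (int k) = a (int (k mod q))" by (rule per_nat[OF aper])
    have bk: "b (int k + 1) = b (int i)" unfolding i_def using per_nat[OF bper, of "Suc k"] by (simp add: add.commute)
    have ak1: "a (int k + 1) = a (int i)" unfolding i_def using per_nat[OF aper, of "Suc k"] by (simp add: add.commute)
    have ss: "sig ^ Suc (Suc k) = sig ^ k" using sig by (simp add: algebra_simps)
    have "a (int k) * psi k + b (int k + 1) * psi (Suc k) + a (int k + 1) * psi (Suc (Suc k))
        = sig ^ k * (a (int (k mod q)) * v (k mod q) + a (int i) * v (Suc i mod q)) + sig * sig ^ k * b (int i) * v i"
      unfolding psi_def ak bk ak1 ss si[symmetric] i_def[symmetric] by (simp add: algebra_simps)
    also have "\<dots> = sig ^ k * (lam * v i - sig * b (int i) * v i) + sig * sig ^ k * b (int i) * v i"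
    proof -
      have row': "a (int (k mod q)) * v (k mod q) + a (int i) * v (Suc i mod q) = lam * v i - sig * b (int i) * v i"
        using row by linarith
      show ?thesis unfolding row' ..
    qed
    also have "\<dots> = sig ^ k * lam * v i" by (simp add: algebra_simps)
    also have "\<dots> = (sig * lam) * psi (Suc k)"
      unfolding psi_def i_def[symmetric] using sig by (simp add: algebra_simps)
    finally show ?thesis .
  qed
  have aq: "a (int q) = a 0" using aper[rule_format, of 0] by simp
  have p0: "psi 0 = v 0" by (simp add: psi_def)
  have p1: "psi 1 = sig * v 1" using q2 by (simp add: psi_def)
  have pq: "psi q = sig ^ q * psi 0" using p0 by (simp add: psi_def)
  have "Suc q mod q = 1 mod q" by (metis Suc_eq_plus1_left mod_add_self2)
  then have "Suc q mod q = 1" using q2 by simp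
  then have pq1: "psi (Suc q) = sig ^ q * psi 1" using p1 q2 by (simp add: psi_def algebra_simps)
  have ee: "sig ^ q * sig ^ q = 1" using sig by (metis power_mult_distrib power_one)
  have nz: "(psi 0, psi 1) \<noteq> (0, 0)"
  proof
    assume z: "(psi 0, psi 1) = (0, 0)"
    have "psi n = 0" for n using sol_formula[OF apos rec, of n] z by simp
    then have "v i = 0" if "i < q" for i using that sig unfolding psi_def
      by (metis mod_less mult_eq_0_iff power_eq_0_iff zero_neq_one mult_zero_left)
    then have "Nq q v = 0" unfolding Nq_def by simp
    then show False using Nv by simp
  qed
  show ?thesis by (rule sol_root[OF apos aq rec pq pq1 ee nz])
qed

fun cheb :: "nat \<Rightarrow> real poly" where
  "cheb 0 = 1"
| "cheb (Suc 0) = [:0, 1:]"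
| "cheb (Suc (Suc n)) = pCons 0 (smult 2 (cheb (Suc n))) - cheb n"

lemma cheb_cos: "poly (cheb n) (cos t) = cos (real n * t)"
proof (induction n rule: cheb.induct)
  case (3 n)
  have "cos (real (Suc (Suc n)) * t) + cos (real n * t) = 2 * cos t * cos (real (Suc n) * t)"
  proof -
    have a: "real (Suc (Suc n)) * t = real (Suc n) * t + t" by (simp add: algebra_simps)
    have b: "real n * t = real (Suc n) * t - t" by (simp add: algebra_simps)
    show ?thesis unfolding a b cos_add cos_diff by (simp add: algebra_simps)
  qed
  then show ?case using 3 by (simp add: algebra_simps)
qed simp_all

lemma cheb_deg: "degree (cheb n) \<le> n \<and> coeff (cheb n) n = (if n = 0 then 1 else 2 ^ (n - 1))"
proof (induction n rule: cheb.induct)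
  case (3 n)
  have d: "degree (cheb (Suc (Suc n))) \<le> Suc (Suc n)"
  proof -
    have "degree (pCons 0 (smult 2 (cheb (Suc n)))) \<le> Suc (Suc n)"
      using 3(1) by (metis Suc_le_mono degree_pCons_le degree_smult_le le_trans)
    moreover have "degree (cheb n) \<le> Suc (Suc n)" using 3(2) by simp
    ultimately show ?thesis by (simp add: degree_diff_le)
  qed
  have "coeff (cheb n) (Suc (Suc n)) = 0" using 3(2) by (intro coeff_eq_0) simp
  then have "coeff (cheb (Suc (Suc n))) (Suc (Suc n)) = 2 * 2 ^ n" using 3(1) by simp
  then show ?case using d by simp
qed (auto simp: degree_pCons_le)

lemma poly_degree_less_roots:
  fixes R :: "real poly"
  assumes "R \<noteq> 0" and "inj_on x {..<n}" and "\<forall>k<n. poly R (x k) = 0"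
  shows "n \<le> degree R"
proof -
  have "x ` {..<n} \<subseteq> {y. poly R y = 0}" using assms by auto
  moreover have "finite {y. poly R y = 0}" using assms(1) by (rule poly_roots_finite)
  ultimately have "card (x ` {..<n}) \<le> card {y. poly R y = 0}" by (rule card_mono[rotated])
  also have "\<dots> \<le> degree R" by (rule card_poly_roots_bound[OF assms(1)])
  finally show ?thesis using card_image[OF assms(2)] by simp
qed

lemma cheb_bound:
  fixes P :: "real poly"
  assumes n1: "n \<ge> 1" and dP: "degree P \<le> n" and bd: "\<forall>y\<in>{-1..1}. \<bar>poly P y\<bar> \<le> 2"
  shows "\<bar>coeff P n\<bar> \<le> 2 ^ n"
proof (rule ccontr)
  assume "\<not> ?thesis"
  then have big: "\<bar>coeff P n\<bar> > 2 ^ n" by simp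
  define c where "c = coeff P n"
  have cnz: "c \<noteq> 0" using big c_def by auto
  define s where "s = 2 ^ n / c"
  have s1: "\<bar>s\<bar> < 1" using big cnz unfolding s_def c_def by (simp add: abs_div_pos divide_less_eq)
  define R where "R = smult 2 (cheb n) - smult s P"
  have cR: "coeff R n = 0"
  proof -
    have "coeff (cheb n) n = 2 ^ (n - 1)" using cheb_deg[of n] n1 by simp
    moreover have "2 * (2::real) ^ (n - 1) = 2 ^ n" using n1 by (metis power_Suc Suc_diff_1 less_le_trans zero_less_one)
    ultimately show ?thesis unfolding R_def s_def c_def using cnz c_def by simp
  qed
  have dR: "degree R \<le> n" unfolding R_def using cheb_deg[of n] dP
    by (meson degree_diff_le degree_smult_le le_trans)
  define y where "y k = cos (real k * pi / real n)" for k
  have valR: "(-1) ^ k * poly R (y k) > 0" for k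
  proof -
    have "poly (cheb n) (y k) = cos (real k * pi)"
      unfolding y_def cheb_cos using n1 by (simp add: field_simps)
    also have "\<dots> = (-1) ^ k" by (simp add: cos_int_times_real)
    finally have ch: "poly (cheb n) (y k) = (-1) ^ k" .
    have "y k \<in> {-1..1}" unfolding y_def by simp
    then have "\<bar>poly P (y k)\<bar> \<le> 2" using bd by blast
    then have "\<bar>s\<bar> * \<bar>poly P (y k)\<bar> \<le> \<bar>s\<bar> * 2" by (intro mult_left_mono) auto
    then have "\<bar>s * poly P (y k)\<bar> < 2" using s1 by (simp add: abs_mult)
    then have "\<bar>(-1) ^ k * (s * poly P (y k))\<bar> < 2" by (simp add: abs_mult)
    moreover have "(-1) ^ k * poly R (y k) = 2 - (-1) ^ k * (s * poly P (y k))"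
      unfolding R_def using ch by (simp add: algebra_simps)
    ultimately show ?thesis by linarith
  qed
  have Rnz: "R \<noteq> 0" using valR[of 0] by auto
  have ymono: "y k' \<le> y k" if "k \<le> k'" "k' \<le> n" for k k'
    unfolding y_def using that n1
    by (intro cos_monotone_0_pi_le) (auto simp: field_simps intro!: mult_right_mono)
  have root: "\<exists>x. y (Suc k) < x \<and> x < y k \<and> poly R x = 0" if k: "k < n" for k
  proof -
    define g where "g = smult ((-1) ^ Suc k) R"
    have ga: "poly g (y (Suc k)) > 0" using valR[of "Suc k"] by (simp add: g_def)
    have gb: "poly g (y k) < 0" using valR[of k] by (simp add: g_def)
    have le: "y (Suc k) \<le> y k" using ymono k by simp
    obtain x where x: "y (Suc k) \<le> x" "x \<le> y k" "poly g x = 0"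
      using IVT2[of "poly g" "y k" 0 "y (Suc k)"] ga gb le by force
    have "poly R x = 0" using x(3) by (simp add: g_def)
    moreover have "x \<noteq> y k" "x \<noteq> y (Suc k)" using x(3) ga gb by auto
    ultimately show ?thesis using x by force
  qed
  then obtain x where x: "\<And>k. k < n \<Longrightarrow> y (Suc k) < x k \<and> x k < y k \<and> poly R (x k) = 0"
    by metis
  have inj: "inj_on x {..<n}"
  proof (rule inj_onI)
    fix k k' assume kk: "k \<in> {..<n}" "k' \<in> {..<n}" "x k = x k'"
    show "k = k'"
    proof (rule ccontr)
      assume "k \<noteq> k'"
      then consider "k < k'" | "k' < k" by linarith
      then show False
      proof cases
        case 1
        then have "y k' \<le> y (Suc k)" using ymono kk by simp
        then show ?thesis using x[of k] x[of k'] kk by auto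
      next
        case 2
        then have "y k \<le> y (Suc k')" using ymono kk by simp
        then show ?thesis using x[of k] x[of k'] kk by auto
      qed
    qed
  qed
  have "n \<le> degree R" by (rule poly_degree_less_roots[OF Rnz inj]) (use x in auto)
  then have "degree R = n" using dR by simp
  then have "lead_coeff R = 0" using cR by simp
  then show False using Rnz by simp
qed

lemma prod_Icc_int: "(\<Prod>i\<in>{1..int q}. f i) = (\<Prod>k\<in>{1..q}. f (int k))"
proof -
  have e: "{1..int q} = int ` {1..q}"
  proof
    show "{1..int q} \<subseteq> int ` {1..q}"
    proof
      fix x assume "x \<in> {1..int q}"
      then have "x = int (nat x)" "nat x \<in> {1..q}" by auto
      then show "x \<in> int ` {1..q}" by blast
    qed
  qed auto
  show ?thesis unfolding e by (subst prod.reindex) auto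
qed

lemma prod_1q: "(\<Prod>k\<in>{1..q}. f k) = (\<Prod>k<q. f (Suc k))"
  by (induction q) (auto simp: prod.cl_ivl_Suc)

lemma per_int:
  fixes a :: "int \<Rightarrow> real"
  assumes per: "\<forall>n. a (n + int q) = a n" and q: "q > 0"
  shows "a n = a (int (nat (n mod int q)))"
proof -
  have up: "a (x + int q * int m) = a x" for x m
  proof (induction m)
    case (Suc m)
    have "a (x + int q * int (Suc m)) = a ((x + int q * int m) + int q)" by (simp add: algebra_simps)
    also have "\<dots> = a (x + int q * int m)" using per by simp
    finally show ?case using Suc by simp
  qed simp
  have all: "a (x + int q * m) = a x" for x m
  proof (cases "m \<ge> 0")
    case True
    then show ?thesis using up[of x "nat m"] by simp
  next
    case False
    define m' where "m' = nat (- m)"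
    have mm: "m = - int m'" using False by (simp add: m'_def)
    have "a ((x + int q * m) + int q * int m') = a (x + int q * m)" by (rule up)
    moreover have "(x + int q * m) + int q * int m' = x" using mm by (simp add: algebra_simps)
    ultimately show ?thesis by simp
  qed
  have "n = n mod int q + int q * (n div int q)" by simp
  then have "a n = a (n mod int q)" using all by metis
  moreover have "n mod int q \<ge> 0" using q by simp
  ultimately show ?thesis by simp
qed

lemma poly_lprod: "poly (lprod r) x = (\<Prod>y\<leftarrow>r. x - y)"
  by (induction r) (auto simp: algebra_simps)

lemma prod_list_nth: "(\<Prod>y\<leftarrow>r. g y) = (\<Prod>i<length r. g (r ! i) :: real)"
proof (induction r)
  case (Cons y r)
  then show ?case by (simp del: prod.lessThan_Suc add: prod.lessThan_Suc_shift)
qed simp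

lemma prod_pairs: "(\<Prod>i<Suc (2 * k). f i) = f 0 * (\<Prod>m\<in>{1..k}. f (2 * m - 1) * f (2 * m) :: real)"
proof (induction k)
  case (Suc k)
  have "(\<Prod>i<Suc (2 * Suc k). f i) = (\<Prod>i<Suc (2 * k). f i) * f (Suc (2 * k)) * f (Suc (Suc (2 * k)))"
    by simp
  also have "\<dots> = f 0 * ((\<Prod>m\<in>{1..k}. f (2 * m - 1) * f (2 * m)) * (f (2 * Suc k - 1) * f (2 * Suc k)))"
    unfolding Suc by simp
  also have "\<dots> = f 0 * (\<Prod>m\<in>{1..Suc k}. f (2 * m - 1) * f (2 * m))"
    by (simp add: prod.cl_ivl_Suc)
  finally show ?case .
qed simp

lemma four_poly: "(4 :: real poly) = [:4:]"
  by (simp add: numeral_poly)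

lemma cev_G: "cev ((p)\<^sup>2 - 4) z = (cev p z)\<^sup>2 - 4"
  unfolding four_poly by (simp add: cev_diff cev_mult cev_const power2_eq_square)

theorem lemma2:
  fixes a b :: "int \<Rightarrow> real" and q :: nat
  assumes "q \<ge> 2"
    and "\<forall>n. a n > 0"
    and "\<forall>n. a (n + int q) = a n"
    and "\<forall>n. b (n + int q) = b n"
    and "\<forall>p. 1 \<le> p \<and> p < q \<longrightarrow> \<not> (\<forall>n. a (n + int p) = a n \<and> b (n + int p) = b n)"
  shows "half_width a b q > 2 * geo_mean_a a q
         \<and> (\<exists>m\<in>{1..q-1}. edge_minus a b q m < edge_plus a b q m)"
proof -
  note q2 = assms(1) and apos = assms(2) and aper = assms(3) and bper = assms(4) and minp = assms(5)
  have q0: "q > 0" and q1: "q \<ge> 1" using q2 by auto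
  define D where "D = discr a b q"
  define Pr where "Pr = (\<Prod>k\<in>{1..q}. a (int k))"
  have Prpos: "Pr > 0" unfolding Pr_def using apos by (intro prod_pos) auto
  define L where "L = 1 / Pr"
  have Lpos: "L > 0" using Prpos by (simp add: L_def)
  have dD: "degree D = q" and cD: "coeff D q = L"
    using discr_deg[OF apos q1, of b] by (simp_all add: D_def L_def Pr_def)
  have Dnz: "D \<noteq> 0" using cD Lpos by auto
  define G where "G = D\<^sup>2 - 4"
  have dD2: "degree (D\<^sup>2) = 2 * q" using Dnz dD by (simp add: degree_power_eq)
  have lD2: "lead_coeff (D\<^sup>2) = L\<^sup>2" using dD cD by (simp add: lead_coeff_power)
  have c4: "coeff [:4::real:] (2 * q) = 0" using q0 by (simp add: coeff_pCons split: nat.split)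
  have cG: "coeff G (2 * q) = L\<^sup>2" using dD2 lD2 q0 c4 unfolding G_def four_poly by simp
  have dG: "degree G = 2 * q"
  proof -
    have "degree G \<le> max (degree (D\<^sup>2)) (degree (4 :: real poly))"
      unfolding G_def by (rule degree_diff_le_max)
    then have "degree G \<le> 2 * q" using dD2 unfolding four_poly by simp
    moreover have "coeff G (2 * q) \<noteq> 0" using cG Lpos by simp
    ultimately show ?thesis using le_degree le_antisym by blast
  qed
  have Gnz: "G \<noteq> 0" using cG Lpos by auto
  have lG: "lead_coeff G = L\<^sup>2" using dG cG by simp
  have Greal: "Im z = 0" if "cev G z = 0" for z
  proof -
    have "(cev D z)\<^sup>2 = 4" using that unfolding G_def cev_G by simp
    then have "(cev D z - 2) * (cev D z + 2) = 0" by (simp add: algebra_simps power2_eq_square)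
    then have "cev D z = 2 \<or> cev D z = - 2" by (simp add: add_eq_0_iff2)
    then show ?thesis
    proof
      assume "cev D z = 2"
      then show ?thesis using discr_root_real[OF q2 apos aper, of 1 b z] unfolding D_def by simp
    next
      assume "cev D z = - 2"
      then show ?thesis using discr_root_real[OF q2 apos aper, of "-1" b z] unfolding D_def by simp
    qed
  qed
  obtain xs where xs: "length xs = degree G" "G = smult (lead_coeff G) (lprod xs)"
    using real_split[OF Greal Gnz] by blast
  define r where "r = sort xs"
  have sr: "sorted_roots G = r" unfolding r_def by (rule sorted_roots_eq[OF xs(2) Gnz])
  have lr: "length r = 2 * q" using xs(1) dG by (simp add: r_def)
  have sorted_r: "sorted r" by (simp add: r_def)
  have Gr: "G = smult (L\<^sup>2) (lprod r)"
  proof -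
    have "lprod r = lprod xs" unfolding r_def lprod_mset by simp
    then show ?thesis using xs(2) lG by simp
  qed
  have em: "edge_minus a b q m = r ! (2 * m - 1)" for m
    by (simp add: edge_minus_def sr[unfolded G_def D_def])
  have ep: "edge_plus a b q m = r ! (2 * m)" for m
    by (simp add: edge_plus_def sr[unfolded G_def D_def])
  define al where "al = r ! 0"
  define be where "be = r ! (2 * q - 1)"
  have hw: "half_width a b q = (be - al) / 2"
    unfolding half_width_def em ep al_def be_def by simp
  have polyG: "poly G y = L\<^sup>2 * (\<Prod>i<2 * q. y - r ! i)" for y
    unfolding Gr by (simp add: poly_lprod prod_list_nth lr)
  have inroots: "al \<le> y \<and> y \<le> be" if "poly G y = 0" for y
  proof -
    have "poly (lprod r) y = 0" using that Lpos unfolding Gr by simp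
    then have "y \<in> set r" by (simp add: poly_lprod_zero)
    then obtain i where i: "i < length r" "r ! i = y" by (auto simp: in_set_conv_nth)
    have "r ! 0 \<le> r ! i" using i sorted_r by (intro sorted_nth_mono) auto
    moreover have "r ! i \<le> r ! (2 * q - 1)" using i sorted_r lr by (intro sorted_nth_mono) auto
    ultimately show ?thesis using i by (simp add: al_def be_def)
  qed
  define K1 where "K1 = Kj a (\<lambda>n. 1 * b n) q"
  define K2 where "K2 = Kj a (\<lambda>n. (-1) * b n) q"
  have sym1: "K1 i j = K1 j i" for i j unfolding K1_def by (rule Kj_sym)
  have sym2: "K2 i j = K2 j i" for i j unfolding K2_def by (rule Kj_sym)
  obtain lam1 w1 where w1: "Nq q w1 = 1" "Fq K1 q w1 = lam1" and le1: "\<forall>v. Fq K1 q v \<le> lam1 * Nq q v"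
    using ray_max[OF q1, of K1] by blast
  obtain lam2 w2 where w2: "Nq q w2 = 1" "Fq K2 q w2 = lam2" and le2: "\<forall>v. Fq K2 q v \<le> lam2 * Nq q v"
    using ray_max[OF q1, of K2] by blast
  have eig1: "(\<Sum>j<q. K1 i j * w1 j) = lam1 * w1 i" if "i < q" for i
    by (rule ray_kernel[OF sym1 le1 _ that]) (use w1 in simp)
  have eig2: "(\<Sum>j<q. K2 i j * w2 j) = lam2 * w2 i" if "i < q" for i
    by (rule ray_kernel[OF sym2 le2 _ that]) (use w2 in simp)
  have r1: "poly G (1 * lam1) = 0"
    unfolding G_def D_def by (rule eig_root[OF q2 apos aper bper _ eig1[unfolded K1_def] w1(1)]) simp
  have r2: "poly G ((-1) * lam2) = 0"
    unfolding G_def D_def by (rule eig_root[OF q2 apos aper bper _ eig2[unfolded K2_def] w2(1)]) simp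
  have lam1be: "lam1 \<le> be" using inroots[OF r1] by simp
  have lam2al: "al \<le> - lam2" using inroots[OF r2] by simp
  define A where "A = geo_mean_a a q"
  have APr: "A = root q Pr" unfolding A_def geo_mean_a_def Pr_def prod_Icc_int ..
  have Apos: "A > 0" unfolding APr using q0 Prpos by (rule real_root_gt_zero)
  have Aq: "A ^ q = Pr" unfolding APr using q0 Prpos by simp
  have Pr0: "(\<Prod>k<q. a (int k)) = Pr"
  proof -
    have "(\<Prod>k<Suc q. a (int k)) = a (int 0) * (\<Prod>k<q. a (int (Suc k)))"
      by (rule prod.lessThan_Suc_shift)
    moreover have "(\<Prod>k<Suc q. a (int k)) = (\<Prod>k<q. a (int k)) * a (int q)" by simp
    moreover have "a (int q) = a 0" using aper[rule_format, of 0] by simp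
    moreover have "a 0 > 0" using apos by simp
    ultimately show ?thesis unfolding Pr_def prod_1q by (simp add: mult.commute)
  qed
  define t where "t k = A ^ k / (\<Prod>j<k. a (int j))" for k
  have prodpos: "(\<Prod>j<k. a (int j)) > 0" for k using apos by (intro prod_pos) auto
  have tpos: "t k > 0" for k unfolding t_def using Apos prodpos[of k] by simp
  have tstep: "a (int k) * t (Suc k) = A * t k" for k
  proof -
    have "a (int k) > 0" using apos by simp
    then show ?thesis unfolding t_def using prodpos[of k] by (simp add: field_simps)
  qed
  have tq: "t q = 1" unfolding t_def Pr0 Aq using Prpos by simp
  have t0: "t 0 = 1" unfolding t_def by simp
  have tcyc: "a (int k) * t (Suc k mod q) = A * t k" if "k < q" for k
  proof (cases "Suc k < q")
    case True then show ?thesis using tstep by simp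
  next
    case False
    then have "Suc k = q" using that by simp
    then show ?thesis using tstep[of k] tq t0 by simp
  qed
  define N where "N = Nq q t"
  have t2pos: "(t i)\<^sup>2 > 0" for i using tpos[of i] by simp
  have Npos: "N > 0" unfolding N_def Nq_def
  proof (rule sum_pos)
    show "finite {..<q}" by simp
    show "{..<q} \<noteq> {}" using q0 by auto
    show "\<And>i. i \<in> {..<q} \<Longrightarrow> 0 < (t i)\<^sup>2" by (rule t2pos)
  qed
  define Sb where "Sb = (\<Sum>i<q. b (int i) * (t i)\<^sup>2)"
  have ta: "(\<Sum>i<q. a (int i) * t i * t (Suc i mod q)) = A * N"
  proof -
    have "(\<Sum>i<q. a (int i) * t i * t (Suc i mod q)) = (\<Sum>i<q. A * (t i)\<^sup>2)"
    proof (intro sum.cong refl)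
      fix i assume "i \<in> {..<q}"
      then have "a (int i) * t (Suc i mod q) = A * t i" using tcyc by simp
      then show "a (int i) * t i * t (Suc i mod q) = A * (t i)\<^sup>2"
        by (simp add: power2_eq_square algebra_simps)
    qed
    then show ?thesis unfolding N_def Nq_def by (simp add: sum_distrib_left)
  qed
  have F1: "Fq K1 q t = Sb + 2 * A * N"
    unfolding K1_def Fq_Kj[OF q0] ta Sb_def by simp
  have F2: "Fq K2 q t = - Sb + 2 * A * N"
    unfolding K2_def Fq_Kj[OF q0] ta Sb_def by (simp add: sum_negf)
  have i1: "Sb + 2 * A * N \<le> lam1 * N" using le1 F1 unfolding N_def by metis
  have i2: "- Sb + 2 * A * N \<le> lam2 * N" using le2 F2 unfolding N_def by metis
  have "4 * A * N \<le> (lam1 + lam2) * N" using i1 i2 by (simp add: algebra_simps)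
  then have l12: "4 * A \<le> lam1 + lam2" using Npos by simp
  have strict: "half_width a b q > 2 * A"
  proof (rule ccontr)
    assume "\<not> ?thesis"
    then have "be - al \<le> 4 * A" unfolding hw by simp
    then have l12e: "lam1 + lam2 = 4 * A" using l12 lam1be lam2al by simp
    have s4: "lam1 * N + lam2 * N = (4 * A) * N" unfolding l12e[symmetric] by (simp add: distrib_right)
    have "Sb + 2 * A * N + (- Sb + 2 * A * N) = (4 * A) * N" by (simp add: algebra_simps)
    then have e1: "Fq K1 q t = lam1 * Nq q t" and e2: "Fq K2 q t = lam2 * Nq q t"
      using i1 i2 F1 F2 s4 unfolding N_def by linarith+
    have row1: "(\<Sum>j<q. K1 i j * t j) = lam1 * t i" if "i < q" for i
      by (rule ray_kernel[OF sym1 le1 e1 that])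
    have row2: "(\<Sum>j<q. K2 i j * t j) = lam2 * t i" if "i < q" for i
      by (rule ray_kernel[OF sym2 le2 e2 that])
    have key: "b (int (Suc k mod q)) = (lam1 - lam2) / 2 \<and> a (int (k mod q)) = A" for k
    proof -
      define i where "i = Suc k mod q"
      have i: "i < q" using q0 unfolding i_def by simp
      define R where "R = a (int i) * t (Suc i mod q) + a (int (k mod q)) * t (k mod q)"
      have p1: "1 * b (int i) * t i + R = lam1 * t i"
        using row1[OF i] Kj_row[OF q0 i, of a "\<lambda>n. 1 * b n" t] Kj_row_pred[OF q0, of a t k]
        unfolding K1_def R_def i_def by simp
      have p2: "(-1) * b (int i) * t i + R = lam2 * t i"
        using row2[OF i] Kj_row[OF q0 i, of a "\<lambda>n. (-1) * b n" t] Kj_row_pred[OF q0, of a t k]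
        unfolding K2_def R_def i_def by simp
      have "2 * b (int i) * t i = (lam1 - lam2) * t i" using p1 p2 by (simp add: algebra_simps)
      then have bi: "b (int i) = (lam1 - lam2) / 2" using tpos[of i] by simp
      have "2 * R = (lam1 + lam2) * t i" using p1 p2 by (simp add: algebra_simps)
      then have R2: "R = 2 * A * t i" using l12e by simp
      have ai: "a (int i) * t (Suc i mod q) = A * t i" using tcyc[OF i] .
      have ak1: "a (int (k mod q)) * t (k mod q) = A * t i" using R2 ai unfolding R_def by simp
      have km: "k mod q < q" using q0 by simp
      have "Suc (k mod q) mod q = i" unfolding i_def by (simp add: mod_Suc_eq)
      then have ak2: "a (int (k mod q)) * t i = A * t (k mod q)" using tcyc[OF km] by simp
      define x where "x = a (int (k mod q))"
      have "x * (x * t (k mod q)) = A * (A * t (k mod q))"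
      proof -
        have "x * (x * t (k mod q)) = x * (A * t i)" using ak1 unfolding x_def by simp
        also have "\<dots> = A * (x * t i)" by simp
        also have "\<dots> = A * (A * t (k mod q))" using ak2 unfolding x_def by simp
        finally show ?thesis .
      qed
      then have "x * x = A * A" using tpos[of "k mod q"] by (simp add: mult.assoc[symmetric])
      then have "x = A" using Apos apos unfolding x_def
        by (metis abs_of_pos power2_eq_square real_sqrt_abs)
      then show ?thesis using bi unfolding x_def i_def by simp
    qed
    have aconst: "a n = A" for n
    proof -
      have "a n = a (int (nat (n mod int q)))" by (rule per_int[OF aper q0])
      moreover have "nat (n mod int q) < q" using q0 by (simp add: nat_less_iff)
      ultimately show ?thesis using key[of "nat (n mod int q)"] by simp
    qed
    have bconst: "b n = (lam1 - lam2) / 2" for n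
    proof -
      define j where "j = nat (n mod int q)"
      have "b n = b (int j)" unfolding j_def by (rule per_int[OF bper q0])
      moreover have j: "j < q" using q0 unfolding j_def by (simp add: nat_less_iff)
      have "j = Suc (j + q - 1) mod q"
      proof -
        have "Suc (j + q - 1) = j + q" using q0 by simp
        then show ?thesis using j by simp
      qed
      ultimately show ?thesis using key[of "j + q - 1"] by metis
    qed
    have "\<forall>n. a (n + int 1) = a n \<and> b (n + int 1) = b n"
    proof
      fix n :: int
      show "a (n + int 1) = a n \<and> b (n + int 1) = b n"
        using aconst[of n] aconst[of "n + int 1"] bconst[of n] bconst[of "n + int 1"] by simp
    qed
    moreover have "1 \<le> (1::nat) \<and> 1 < q" using q2 by simp
    ultimately show False using minp by blast
  qed
  have gap: "\<exists>m\<in>{1..q-1}. edge_minus a b q m < edge_plus a b q m"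
  proof (rule ccontr)
    assume ng: "\<not> ?thesis"
    have cl: "r ! (2 * m - 1) = r ! (2 * m)" if "m \<in> {1..q-1}" for m
    proof -
      have "\<not> r ! (2 * m - 1) < r ! (2 * m)" using ng that unfolding em ep by blast
      moreover have "r ! (2 * m - 1) \<le> r ! (2 * m)" using that sorted_r lr
        by (intro sorted_nth_mono) auto
      ultimately show ?thesis by simp
    qed
    have Gle: "poly G x \<le> 0" if x: "al \<le> x" "x \<le> be" for x
    proof -
      define f where "f i = x - r ! i" for i
      have "(\<Prod>i<2 * q. f i) = (\<Prod>i<Suc (2 * (q - 1)). f i) * f (2 * q - 1)"
      proof -
        have "2 * q = Suc (Suc (2 * (q - 1)))" using q0 by simp
        then show ?thesis by simp
      qed
      also have "\<dots> = f 0 * (\<Prod>m\<in>{1..q-1}. f (2 * m - 1) * f (2 * m)) * f (2 * q - 1)"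
        by (simp only: prod_pairs)
      finally have pe: "(\<Prod>i<2 * q. f i) = f 0 * f (2 * q - 1) * (\<Prod>m\<in>{1..q-1}. f (2 * m - 1) * f (2 * m))"
        by (simp add: algebra_simps)
      have "(\<Prod>m\<in>{1..q-1}. f (2 * m - 1) * f (2 * m)) \<ge> 0"
      proof (intro prod_nonneg)
        fix m assume "m \<in> {1..q-1}"
        then have "f (2 * m - 1) * f (2 * m) = (f (2 * m))\<^sup>2" using cl unfolding f_def by (simp add: power2_eq_square)
        then show "f (2 * m - 1) * f (2 * m) \<ge> 0" by simp
      qed
      moreover have "f 0 * f (2 * q - 1) \<le> 0" using x unfolding f_def al_def be_def
        by (intro mult_nonneg_nonpos) auto
      ultimately have "(\<Prod>i<2 * q. f i) \<le> 0" unfolding pe by (simp add: mult_nonpos_nonneg)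
      then show ?thesis unfolding polyG f_def[symmetric] using Lpos by (simp add: mult_nonneg_nonpos)
    qed
    have Dle: "\<bar>poly D x\<bar> \<le> 2" if "al \<le> x" "x \<le> be" for x
    proof -
      have "poly G x = (poly D x)\<^sup>2 - 4" unfolding G_def four_poly by (simp add: power2_eq_square)
      then have "\<bar>poly D x\<bar>\<^sup>2 \<le> 2\<^sup>2" using Gle[OF that] by simp
      then show ?thesis by (rule power2_le_imp_le) simp
    qed
    define c where "c = (be - al) / 2"
    define m0 where "m0 = (al + be) / 2"
    have cA: "c > 2 * A" using strict hw unfolding c_def A_def by simp
    then have cpos: "c > 0" using Apos by simp
    define P where "P = pcompose D [:m0, c:]"
    have dlin: "degree [:m0, c:] = 1" using cpos by simp
    have dP: "degree P = q" unfolding P_def using degree_pcompose[of D "[:m0, c:]"] dD dlin by simp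
    have lP: "lead_coeff P = L * c ^ q"
      unfolding P_def using lead_coeff_comp[of "[:m0, c:]" D] dlin dD cD cpos by simp
    have cP: "coeff P q = L * c ^ q" using lP dP by simp
    have bdP: "\<forall>y\<in>{-1..1}. \<bar>poly P y\<bar> \<le> 2"
    proof
      fix y :: real assume y: "y \<in> {-1..1}"
      have "c * y \<le> c" using y cpos by (simp add: mult_left_le)
      moreover have "- c \<le> c * y" using y cpos
        by (metis atLeastAtMost_iff mult.right_neutral mult_le_cancel_left_pos mult_minus_right)
      ultimately have "al \<le> m0 + c * y" "m0 + c * y \<le> be" unfolding m0_def c_def by (simp_all add: field_simps)
      then show "\<bar>poly P y\<bar> \<le> 2" unfolding P_def poly_pcompose using Dle by (simp add: algebra_simps)
    qed
    have "\<bar>coeff P q\<bar> \<le> 2 ^ q" by (rule cheb_bound[OF q1 _ bdP]) (simp add: dP)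
    then have "L * c ^ q \<le> 2 ^ q" using cP Lpos cpos by simp
    then have "c ^ q \<le> 2 ^ q * Pr" using Prpos unfolding L_def by (simp add: field_simps)
    also have "\<dots> = (2 * A) ^ q" using Aq by (simp add: power_mult_distrib)
    finally have "c ^ Suc (q - 1) \<le> (2 * A) ^ Suc (q - 1)" using q0 by simp
    then have "c \<le> 2 * A" by (rule power_le_imp_le_base) (use Apos in simp)
    then show False using cA by simp
  qed
  show ?thesis using strict gap unfolding A_def by simp
qed

end
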